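(* Let $n,m,p$ be positive integers with $m\le n$. Let $b_1,\dots,b_m\in\mathbb{R}^n$ be column vectors with nonnegative integer entries $b_{kj}$ such that $B=[b_1,\dots,b_m]$ has rank $m$ and no zero row, let $A=[a_{ij}]$ be an irreducible $m\times m$ matrix with nonnegative entries, and $f(x)=\sum_{i,j=1}^m a_{ij}\,x_1^{b_{1j}}\cdots x_n^{b_{nj}}\,(b_i-b_j)$. Let $C=[c_{ij}]$ be a $p\times n$ matrix with each entry $0$ or a real number $\ge1$, and $h_i(x)=|x_1|^{c_{i1}}\cdots|x_n|^{c_{in}}$. Let $\mathcal{D}=\mathrm{span}\{b_i-b_j\}$ and assume no boundary equilibria (whenever $x\in\mathbb{R}^n_{\ge0}$ has a zero coordinate and $x-\bar x\in\mathcal{D}$ for some $\bar x\in\mathbb{R}^n_{>0}$, then $f(x)\ne0$). Let $f^*(z,u)=f(z)+C'(u-h(z))$. For $\bar x\in E_+$ let $V(z)=\sum_{i=1}^n\bar x_i\,g(z_i/\bar x_i)$, where $g(r)=r\ln r+1-r$ for $r>0$, $g(0)=1$. Then for each $\bar x\in E_+$ and each constant $u_{\max}\ge0$ there exists a constant $c_{\bar x,u_{\max}}$ such that $\nabla V(z)f^*(z,u)\le c_{\bar x,u_{\max}}$ for all $z\in\mathbb{R}^n_{>0}$ and all $u\in[0,u_{\max}]^p$.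
   Context: $E_+=\{x\in\mathbb{R}^n_{>0}:f(x)=0\}$. $C'$ is the transpose of $C$. *)

theory Defs
  imports "HOL-Analysis.Analysis"
begin

definition bcol :: "nat^'m^'n \<Rightarrow> 'm \<Rightarrow> real^'n" where
  "bcol B j = (\<chi> k. real (B $ k $ j))"

definition Breal :: "nat^'m^'n \<Rightarrow> real^'m^'n" where
  "Breal B = (\<chi> k j. real (B $ k $ j))"

definition monom_b :: "nat^'m^'n \<Rightarrow> 'm \<Rightarrow> real^'n \<Rightarrow> real" where
  "monom_b B j x = (\<Prod>k\<in>UNIV. (x $ k) ^ (B $ k $ j))"

definition fvec :: "real^'m^'m \<Rightarrow> nat^'m^'n \<Rightarrow> real^'n \<Rightarrow> real^'n" where
  "fvec A B x = (\<Sum>i\<in>UNIV. \<Sum>j\<in>UNIV. (A $ i $ j * monom_b B j x) *\<^sub>R (bcol B i - bcol B j))"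

(* irreducible square matrix: not reducible, i.e. there is no nonempty proper index set I
   with a_ij = 0 for all i in I, j not in I (permutation-similar to block upper triangular) *)
definition irreducible_mat :: "real^'m^'m \<Rightarrow> bool" where
  "irreducible_mat A \<longleftrightarrow>
     \<not> (\<exists>I::'m set. I \<noteq> {} \<and> I \<noteq> UNIV \<and> (\<forall>i\<in>I. \<forall>j\<in>UNIV - I. A $ i $ j = 0))"

definition hvec :: "real^'n^'p \<Rightarrow> real^'n \<Rightarrow> real^'p" where
  "hvec C x = (\<chi> i. \<Prod>k\<in>UNIV. (if C $ i $ k = 0 then 1 else \<bar>x $ k\<bar> powr (C $ i $ k)))"

definition fstar :: "real^'m^'m \<Rightarrow> nat^'m^'n \<Rightarrow> real^'n^'p \<Rightarrow> real^'n \<Rightarrow> real^'p \<Rightarrow> real^'n" where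
  "fstar A B C z u = fvec A B z + transpose C *v (u - hvec C z)"

definition Dspace :: "nat^'m^'n \<Rightarrow> (real^'n) set" where
  "Dspace B = span {bcol B i - bcol B j | i j. True}"

definition Eplus :: "real^'m^'m \<Rightarrow> nat^'m^'n \<Rightarrow> (real^'n) set" where
  "Eplus A B = {x. (\<forall>k. x $ k > 0) \<and> fvec A B x = 0}"

(* g(r) = r ln r + 1 - r for r > 0, g(0) = 1 (value for r < 0 irrelevant) *)
definition gfun :: "real \<Rightarrow> real" where
  "gfun r = (if r > 0 then r * ln r + 1 - r else 1)"

definition Vfun :: "real^'n \<Rightarrow> real^'n \<Rightarrow> real" where
  "Vfun xb z = (\<Sum>i\<in>UNIV. xb $ i * gfun (z $ i / xb $ i))"

end

theory Submission
  imports Defs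
begin

lemma gfun_deriv: assumes r: "r > 0" shows "(gfun has_real_derivative ln r) (at r)"
proof -
  have "((\<lambda>r. r * ln r + 1 - r) has_real_derivative (1 * ln r + r * inverse r + 0 - 1)) (at r)"
    using r by (auto intro!: derivative_eq_intros)
  then have "((\<lambda>r. r * ln r + 1 - r) has_real_derivative ln r) (at r)" using r by simp
  then show ?thesis
    by (rule has_field_derivative_transform_within_open[where S="{0<..}"]) (auto simp: gfun_def r)
qed

lemma V_deriv:
  fixes xb z :: "real^'n"
  assumes xb: "\<forall>k. xb $ k > 0" and z: "\<forall>k. z $ k > 0"
  shows "(Vfun xb has_derivative (\<lambda>h. \<Sum>k\<in>UNIV. ln (z$k / xb$k) * h$k)) (at z)"
proof -
  have "((\<lambda>z. xb$k * gfun (z$k / xb$k)) has_derivative (\<lambda>h. ln (z$k / xb$k) * h$k)) (at z)" for k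
  proof -
    have d1: "((\<lambda>z::real^'n. z$k / xb$k) has_derivative (\<lambda>h. h$k / xb$k)) (at z)"
      using bounded_linear.has_derivative[OF bounded_linear_vec_nth[of k] has_derivative_ident] xb[rule_format, of k]
      by (auto intro!: derivative_eq_intros)
    have d2: "(gfun has_derivative (\<lambda>t. t * ln (z$k / xb$k))) (at (z$k / xb$k))"
      using gfun_deriv[of "z$k/xb$k"] xb z
      by (simp add: has_field_derivative_def mult.commute[of _ "ln _"])
    have "((\<lambda>z. gfun (z$k / xb$k)) has_derivative (\<lambda>h. (h$k / xb$k) * ln (z$k / xb$k))) (at z)"
      using has_derivative_compose[OF d1 d2] by simp
    from has_derivative_mult_right[OF this, of "xb$k"]
    show ?thesis using xb[rule_format, of k]
      by (simp add: field_simps)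
  qed
  then show ?thesis unfolding Vfun_def[abs_def]
    by (rule has_derivative_sum)
qed

lemma complex_balance:
  fixes A :: "real^'m^'m" and B :: "nat^'m^'n"
  assumes rankB: "rank (Breal B) = CARD('m)" and f0: "fvec A B x = 0"
  shows "(\<Sum>j\<in>UNIV. A$i$j * monom_b B j x) - (\<Sum>j\<in>UNIV. A$j$i) * monom_b B i x = 0"
proof -
  define M where "M j = monom_b B j x" for j
  define g where "g = (\<chi> i. (\<Sum>j\<in>UNIV. A$i$j * M j) - (\<Sum>j\<in>UNIV. A$j$i) * M i)"
  have "Breal B *v g = fvec A B x"
  proof (rule vec_eq_iff[THEN iffD2, rule_format])
    fix k
    have "(Breal B *v g)$k = (\<Sum>i\<in>UNIV. real(B$k$i) * g$i)"
      by (simp add: matrix_vector_mult_def Breal_def)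
    also have "\<dots> = (\<Sum>i\<in>UNIV. \<Sum>j\<in>UNIV. A$i$j * M j * real(B$k$i)) - (\<Sum>i\<in>UNIV. \<Sum>j\<in>UNIV. A$j$i * M i * real(B$k$i))"
      by (simp add: g_def algebra_simps sum_distrib_left sum_distrib_right sum_subtractf)
    also have "(\<Sum>i\<in>UNIV. \<Sum>j\<in>UNIV. A$j$i * M i * real(B$k$i)) = (\<Sum>i\<in>UNIV. \<Sum>j\<in>UNIV. A$i$j * M j * real(B$k$j))"
      by (rule sum.swap)
    also have "(\<Sum>i\<in>UNIV. \<Sum>j\<in>UNIV. A$i$j * M j * real(B$k$i)) - \<dots> = (\<Sum>i\<in>UNIV. \<Sum>j\<in>UNIV. A$i$j * M j * (real(B$k$i) - real(B$k$j)))"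
      by (simp add: sum_subtractf[symmetric] algebra_simps)
    also have "\<dots> = fvec A B x $ k"
      by (simp add: fvec_def bcol_def M_def)
    finally show "(Breal B *v g)$k = fvec A B x $ k" .
  qed
  then have "Breal B *v g = 0" using f0 by simp
  then have "g = 0" using matrix_nonfull_linear_equations_eq[of "Breal B"] rankB by auto
  then have "g $ i = 0" by simp
  then show ?thesis by (simp add: g_def M_def)
qed

lemma exp_ineq: "exp (a::real) * (b - a) \<le> exp b - exp a"
proof -
  have "1 + (b - a) \<le> exp (b - a)" by (rule exp_ge_add_one_self)
  then have "exp a * (1 + (b - a)) \<le> exp a * exp (b - a)" by simp
  then show ?thesis by (simp add: exp_diff algebra_simps)
qed

lemma h_bound:
  fixes u U K L :: real
  assumes "0 \<le> u" "u \<le> U" "K > 0"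
  shows "(u - K * exp L) * L \<le> U^2 / (4*K) + K"
proof (cases "L \<ge> 0")
  case True
  have e: "1 + L \<le> exp L" by (rule exp_ge_add_one_self)
  have "(u - K * exp L) * L \<le> U * L - K * (1 + L) * L"
  proof -
    have "u * L \<le> U * L" using True assms by (simp add: mult_right_mono)
    moreover have "K * L * (1 + L) \<le> K * L * exp L" using True assms e by (simp add: mult_left_mono)
    ultimately show ?thesis by (simp add: algebra_simps)
  qed
  also have "\<dots> \<le> U * L - K * L^2" using True assms by (simp add: power2_eq_square algebra_simps)
  also have "\<dots> \<le> U^2 / (4*K)"
  proof -
    have "0 \<le> (U - 2*K*L)^2" by simp
    then have "4*K*(U*L - K*L^2) \<le> U^2" by (simp add: power2_eq_square algebra_simps)
    then show ?thesis using assms by (simp add: field_simps)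
  qed
  finally show ?thesis using assms by simp
next
  case False
  have e: "1 + (-L) \<le> exp (-L)" by (rule exp_ge_add_one_self)
  then have "-L \<le> exp (-L)" by simp
  then have "(-L) * exp L \<le> exp (-L) * exp L" by (rule mult_right_mono) simp
  then have "(-L) * exp L \<le> 1" by (simp add: exp_minus field_simps)
  then have "K * ((-L) * exp L) \<le> K" using assms mult_left_mono[of "(-L) * exp L" 1 K] by simp
  moreover have "u * L \<le> 0" using False assms by (simp add: mult_nonneg_nonpos)
  moreover have "0 \<le> U^2 / (4*K)" using assms by simp
  ultimately show ?thesis by (simp add: algebra_simps)
qed

lemma main_bound:
  fixes A :: "real^'m^'m" and B :: "nat^'m^'n" and C :: "real^'n^'p"
  assumes rankB: "rank (Breal B) = CARD('m)"
    and A_nonneg: "\<forall>i j. A $ i $ j \<ge> 0"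
    and xbpos: "\<forall>k. xb $ k > 0" and fxb: "fvec A B xb = 0"
    and umax: "umax \<ge> (0::real)"
    and z: "\<forall>k. z $ k > 0" and u: "\<forall>i. 0 \<le> u $ i \<and> u $ i \<le> umax"
  defines "K \<equiv> (\<lambda>i. \<Prod>k\<in>UNIV. (if C $ i $ k = 0 then 1 else xb $ k powr (C $ i $ k)))"
  defines "w \<equiv> (\<chi> k. ln (z $ k / xb $ k))"
  shows "inner w (fstar A B C z u) \<le> (\<Sum>i\<in>UNIV. umax^2 / (4 * K i) + K i)"
proof -
  define M where "M j = monom_b B j xb" for j
  define y where "y j = inner w (bcol B j)" for j
  define L where "L i = (\<Sum>k\<in>UNIV. C $ i $ k * w $ k)" for i
  have zk: "z $ k = xb $ k * exp (w $ k)" for k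
    using xbpos[rule_format, of k] z[rule_format, of k] by (simp add: w_def)
  have Mnn: "M j \<ge> 0" for j
    using xbpos by (simp add: M_def monom_b_def prod_nonneg less_imp_le)
  have Kpos: "K i > 0" for i
    unfolding K_def
  proof (rule prod_pos)
    fix k assume "k \<in> (UNIV::'n set)"
    have "xb $ k > 0" using xbpos by simp
    then show "0 < (if C $ i $ k = 0 then 1 else xb $ k powr (C $ i $ k))" by simp
  qed
  have yj: "y j = (\<Sum>k\<in>UNIV. real (B $ k $ j) * w $ k)" for j
    by (simp add: y_def inner_vec_def bcol_def mult.commute)
  have mz: "monom_b B j z = M j * exp (y j)" for j
  proof -
    have "monom_b B j z = (\<Prod>k\<in>UNIV. (xb $ k) ^ (B $ k $ j) * exp (real (B $ k $ j) * w $ k))"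
      by (simp add: monom_b_def zk power_mult_distrib exp_of_nat_mult)
    also have "\<dots> = M j * exp (y j)"
      by (simp add: prod.distrib M_def monom_b_def yj exp_sum)
    finally show ?thesis .
  qed
  have hz: "hvec C z $ i = K i * exp (L i)" for i
  proof -
    have "(if C $ i $ k = 0 then 1 else \<bar>z $ k\<bar> powr (C $ i $ k)) =
          (if C $ i $ k = 0 then 1 else xb $ k powr (C $ i $ k)) * exp (C $ i $ k * w $ k)" for k
      using xbpos[rule_format, of k] z[rule_format, of k]
      by (simp add: zk powr_mult exp_powr_real abs_of_pos mult.commute)
    then have "hvec C z $ i = (\<Prod>k\<in>UNIV. (if C $ i $ k = 0 then 1 else xb $ k powr (C $ i $ k)) * exp (C $ i $ k * w $ k))"
      by (simp add: hvec_def)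
    also have "\<dots> = K i * exp (L i)"
      by (simp add: prod.distrib K_def L_def exp_sum)
    finally show ?thesis .
  qed
  have split: "inner w (fstar A B C z u) = inner w (fvec A B z) + inner w (transpose C *v (u - hvec C z))"
    by (simp add: fstar_def inner_add_right)
  have p1: "inner w (fvec A B z) = (\<Sum>i\<in>UNIV. \<Sum>j\<in>UNIV. A$i$j * M j * exp (y j) * (y i - y j))"
    by (simp add: fvec_def inner_sum_right inner_diff_right y_def mz mult.assoc)
  have p1le: "inner w (fvec A B z) \<le> 0"
  proof -
    have "inner w (fvec A B z) \<le> (\<Sum>i\<in>UNIV. \<Sum>j\<in>UNIV. A$i$j * M j * (exp (y i) - exp (y j)))"
      unfolding p1
    proof (intro sum_mono)
      fix i j
      have "0 \<le> A$i$j * M j" using A_nonneg Mnn by simp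
      then have "A$i$j * M j * (exp (y j) * (y i - y j)) \<le> A$i$j * M j * (exp (y i) - exp (y j))"
        by (rule mult_left_mono[OF exp_ineq])
      then show "A$i$j * M j * exp (y j) * (y i - y j) \<le> A$i$j * M j * (exp (y i) - exp (y j))"
        by (simp add: mult.assoc)
    qed
    also have "\<dots> = (\<Sum>i\<in>UNIV. \<Sum>j\<in>UNIV. A$i$j * M j * exp (y i)) - (\<Sum>i\<in>UNIV. \<Sum>j\<in>UNIV. A$i$j * M j * exp (y j))"
      by (simp add: sum_subtractf[symmetric] algebra_simps)
    also have "(\<Sum>i\<in>UNIV. \<Sum>j\<in>UNIV. A$i$j * M j * exp (y j)) = (\<Sum>i\<in>UNIV. \<Sum>j\<in>UNIV. A$j$i * M i * exp (y i))"
      by (rule sum.swap)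
    also have "(\<Sum>i\<in>UNIV. \<Sum>j\<in>UNIV. A$i$j * M j * exp (y i)) - \<dots> =
       (\<Sum>i\<in>UNIV. exp (y i) * ((\<Sum>j\<in>UNIV. A$i$j * M j) - (\<Sum>j\<in>UNIV. A$j$i) * M i))"
      by (simp add: sum_subtractf[symmetric] algebra_simps sum_distrib_left sum_distrib_right)
    also have "\<dots> = 0"
      using complex_balance[OF rankB fxb] by (simp add: M_def)
    finally show ?thesis .
  qed
  have p2: "inner w (transpose C *v (u - hvec C z)) = (\<Sum>i\<in>UNIV. (u $ i - K i * exp (L i)) * L i)"
  proof -
    have "inner w (transpose C *v (u - hvec C z)) = (\<Sum>k\<in>UNIV. \<Sum>i\<in>UNIV. w $ k * (C $ i $ k * (u $ i - hvec C z $ i)))"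
      by (simp add: inner_vec_def matrix_vector_mult_def transpose_def sum_distrib_left)
    also have "\<dots> = (\<Sum>i\<in>UNIV. \<Sum>k\<in>UNIV. w $ k * (C $ i $ k * (u $ i - hvec C z $ i)))"
      by (rule sum.swap)
    also have "\<dots> = (\<Sum>i\<in>UNIV. (u $ i - K i * exp (L i)) * L i)"
      by (simp add: hz L_def sum_distrib_left sum_distrib_right algebra_simps sum_subtractf)
    finally show ?thesis .
  qed
  have p2le: "inner w (transpose C *v (u - hvec C z)) \<le> (\<Sum>i\<in>UNIV. umax^2 / (4 * K i) + K i)"
    unfolding p2
    by (rule sum_mono, rule h_bound) (use u Kpos in auto)
  show ?thesis using split p1le p2le by simp
qed

theorem lemma2p10:
  fixes A :: "real^'m^'m" and B :: "nat^'m^'n" and C :: "real^'n^'p"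
  assumes m_le_n: "CARD('m) \<le> CARD('n)"
    and rankB: "rank (Breal B) = CARD('m)"
    and nozero_row: "\<forall>k. \<exists>j. B $ k $ j \<noteq> 0"
    and A_nonneg: "\<forall>i j. A $ i $ j \<ge> 0"
    and A_irred: "irreducible_mat A"
    and C_entries: "\<forall>i k. C $ i $ k = 0 \<or> C $ i $ k \<ge> 1"
    and no_boundary_eq: "\<forall>x. ((\<forall>k. x $ k \<ge> 0) \<and> (\<exists>k. x $ k = 0) \<and>
              (\<exists>xb. (\<forall>k. xb $ k > 0) \<and> x - xb \<in> Dspace B)) \<longrightarrow> fvec A B x \<noteq> 0"
    and xb: "xb \<in> Eplus A B"
    and umax: "umax \<ge> (0::real)"
  shows "\<exists>c. \<forall>z u. (\<forall>k. z $ k > 0) \<and> (\<forall>i. 0 \<le> u $ i \<and> u $ i \<le> umax) \<longrightarrow>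
           (\<exists>D. (Vfun xb has_derivative D) (at z) \<and> D (fstar A B C z u) \<le> c)"
proof -
  have xbpos: "\<forall>k. xb $ k > 0" and fxb: "fvec A B xb = 0"
    using xb by (auto simp: Eplus_def)
  define K where "K = (\<lambda>i. \<Prod>k\<in>UNIV. (if C $ i $ k = 0 then 1 else xb $ k powr (C $ i $ k)))"
  show ?thesis
  proof (intro exI[of _ "\<Sum>i\<in>UNIV. umax^2 / (4 * K i) + K i"] allI impI)
    fix z :: "real^'n" and u :: "real^'p"
    assume H: "(\<forall>k. z $ k > 0) \<and> (\<forall>i. 0 \<le> u $ i \<and> u $ i \<le> umax)"
    define w where "w = (\<chi> k. ln (z $ k / xb $ k))"
    have eq: "(\<lambda>h. \<Sum>k\<in>UNIV. ln (z$k / xb$k) * h$k) = (\<lambda>h. inner w h)"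
      by (simp add: inner_vec_def w_def)
    have "(Vfun xb has_derivative (\<lambda>h. inner w h)) (at z)"
      using V_deriv[OF xbpos] H eq by metis
    moreover have "inner w (fstar A B C z u) \<le> (\<Sum>i\<in>UNIV. umax^2 / (4 * K i) + K i)"
      using main_bound[OF rankB A_nonneg xbpos fxb umax, of z u C] H unfolding K_def w_def by blast
    ultimately show "\<exists>D. (Vfun xb has_derivative D) (at z) \<and> D (fstar A B C z u) \<le> (\<Sum>i\<in>UNIV. umax^2 / (4 * K i) + K i)"
      by blast
  qed
qed

end
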